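(* Let $K$ be any infinite field of characteristic $0$ (e.g. $\mathbb{R}$, $\mathbb{Q}$, the real algebraic numbers). Then the statements of Theorems 4.1 and 5.1 remain true with $\mathbb{C}$ replaced by $K$ throughout: for $\varphi(x)$, $x\in K^n$, in disjunctive normal form $\bigvee_{i=1}^{d}(\bigwedge_{j} t_{ij}=0\wedge\bigwedge_{k} u_{ik}\neq0)$ with $t_{ij},u_{ik}\in K[x]$ there is $p\in K[a,b,x]$ with $\varphi(x)\iff(\exists a\in K)(\forall b\in K)\,p(a,b,x)=0$ for all $x\in K^n$; and for $\varphi(x)$ in conjunctive normal form $\bigwedge_{i=1}^{d}(\bigvee_{j} t_{ij}=0\vee\bigvee_{k} u_{ik}\neq0)$ there is $q\in K[a,b,x]$ with $\varphi(x)\iff(\forall a\in K)(\exists b\in K)\,q(a,b,x)=0$ for all $x\in K^n$ (with the same explicit polynomials and degree bounds as over $\mathbb{C}$).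
   Context: Explicit polynomials: $p=\prod_{i}\big[(1-a\prod_k u_{ik})+\sum_j t_{ij}b^j\big]$ and $q=\big[1-b\prod_{i=1}^d(a-i)\big]\big[\sum_{i=1}^d\prod_{h\neq i}(a-h)\prod_j t_{ij}\prod_k(1-b\,u_{ik})\big]$; degree bounds: $p$ has degree at most $d$ in $a$ and at most the total number of equations in $b$; $q$ has degree at most $2d-1$ in $a$ and at most $f+1$ in $b$, $f$ the maximal number of inequations in a conjunct. *)

theory Defs
  imports Main
begin

datatype var = VA | VB | VX nat

text \<open>Polynomial expressions with coefficients in K; a polynomial in K[vars]
  is a function given by such an expression.\<close>
datatype 'a pexpr =
    PConst 'a
  | PVar var
  | PAdd "'a pexpr" "'a pexpr"
  | PMul "'a pexpr" "'a pexpr"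
  | PNeg "'a pexpr"
  | PPow "'a pexpr" nat

primrec peval :: "(var \<Rightarrow> 'a::comm_ring_1) \<Rightarrow> 'a pexpr \<Rightarrow> 'a" where
  "peval \<rho> (PConst c) = c"
| "peval \<rho> (PVar v) = \<rho> v"
| "peval \<rho> (PAdd p q) = peval \<rho> p + peval \<rho> q"
| "peval \<rho> (PMul p q) = peval \<rho> p * peval \<rho> q"
| "peval \<rho> (PNeg p) = - peval \<rho> p"
| "peval \<rho> (PPow p k) = peval \<rho> p ^ k"

primrec pvars :: "'a pexpr \<Rightarrow> var set" where
  "pvars (PConst c) = {}"
| "pvars (PVar v) = {v}"
| "pvars (PAdd p q) = pvars p \<union> pvars q"
| "pvars (PMul p q) = pvars p \<union> pvars q"
| "pvars (PNeg p) = pvars p"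
| "pvars (PPow p k) = pvars p"

text \<open>Syntactic degree in a variable (an upper bound for the degree of the
  polynomial represented).\<close>
primrec pdeg :: "var \<Rightarrow> 'a pexpr \<Rightarrow> nat" where
  "pdeg v (PConst c) = 0"
| "pdeg v (PVar w) = (if w = v then 1 else 0)"
| "pdeg v (PAdd p q) = max (pdeg v p) (pdeg v q)"
| "pdeg v (PMul p q) = pdeg v p + pdeg v q"
| "pdeg v (PNeg p) = pdeg v p"
| "pdeg v (PPow p k) = k * pdeg v p"

definition env :: "'a \<Rightarrow> 'a \<Rightarrow> (nat \<Rightarrow> 'a) \<Rightarrow> var \<Rightarrow> 'a" where
  "env a b x v = (case v of VA \<Rightarrow> a | VB \<Rightarrow> b | VX k \<Rightarrow> x k)"

definition in_Kx :: "nat \<Rightarrow> 'a pexpr \<Rightarrow> bool" where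
  "in_Kx n p \<longleftrightarrow> pvars p \<subseteq> VX ` {..<n}"

definition in_Kabx :: "nat \<Rightarrow> 'a pexpr \<Rightarrow> bool" where
  "in_Kabx n p \<longleftrightarrow> pvars p \<subseteq> {VA, VB} \<union> VX ` {..<n}"

text \<open>A formula in normal form: a list of d clauses, clause i given by
  (equations t_ij, inequations u_ik).\<close>
type_synonym 'a nf = "('a pexpr list \<times> 'a pexpr list) list"

definition clause_conj :: "(nat \<Rightarrow> 'a::comm_ring_1) \<Rightarrow> 'a pexpr list \<times> 'a pexpr list \<Rightarrow> bool" where
  "clause_conj x c \<longleftrightarrow> (\<forall>t\<in>set (fst c). peval (env 0 0 x) t = 0) \<and> (\<forall>u\<in>set (snd c). peval (env 0 0 x) u \<noteq> 0)"

definition clause_disj :: "(nat \<Rightarrow> 'a::comm_ring_1) \<Rightarrow> 'a pexpr list \<times> 'a pexpr list \<Rightarrow> bool" where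
  "clause_disj x c \<longleftrightarrow> (\<exists>t\<in>set (fst c). peval (env 0 0 x) t = 0) \<or> (\<exists>u\<in>set (snd c). peval (env 0 0 x) u \<noteq> 0)"

definition holds_DNF :: "'a::comm_ring_1 nf \<Rightarrow> (nat \<Rightarrow> 'a) \<Rightarrow> bool" where
  "holds_DNF \<phi> x \<longleftrightarrow> (\<exists>c\<in>set \<phi>. clause_conj x c)"

definition holds_CNF :: "'a::comm_ring_1 nf \<Rightarrow> (nat \<Rightarrow> 'a) \<Rightarrow> bool" where
  "holds_CNF \<phi> x \<longleftrightarrow> (\<forall>c\<in>set \<phi>. clause_disj x c)"

definition nf_over :: "nat \<Rightarrow> 'a nf \<Rightarrow> bool" where
  "nf_over n \<phi> \<longleftrightarrow> (\<forall>c\<in>set \<phi>. (\<forall>t\<in>set (fst c). in_Kx n t) \<and> (\<forall>u\<in>set (snd c). in_Kx n u))"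

definition num_eqs :: "'a nf \<Rightarrow> nat" where
  "num_eqs \<phi> = sum_list (map (\<lambda>c. length (fst c)) \<phi>)"

definition max_ineqs :: "'a nf \<Rightarrow> nat" where
  "max_ineqs \<phi> = Max (insert 0 (set (map (\<lambda>c. length (snd c)) \<phi>)))"

end

theory Submission
  imports Defs "HOL-Computational_Algebra.Polynomial"
begin

definition pprod :: "'a::comm_ring_1 pexpr list \<Rightarrow> 'a pexpr" where
  "pprod ps = foldr PMul ps (PConst 1)"
definition psum :: "'a::comm_ring_1 pexpr list \<Rightarrow> 'a pexpr" where
  "psum ps = foldr PAdd ps (PConst 0)"

fun hor :: "'a::comm_ring_1 pexpr list \<Rightarrow> 'a pexpr" where
  "hor [] = PConst 0"
| "hor [t] = t"
| "hor (t # s # ts) = PAdd t (PMul (PVar VB) (hor (s # ts)))"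

lemma peval_pprod: "peval \<rho> (pprod ps) = prod_list (map (peval \<rho>) ps)"
  by (induction ps) (auto simp: pprod_def)
lemma pdeg_pprod: "pdeg v (pprod ps) = sum_list (map (pdeg v) ps)"
  by (induction ps) (auto simp: pprod_def)
lemma pvars_pprod: "pvars (pprod ps) = \<Union> (pvars ` set ps)"
  by (induction ps) (auto simp: pprod_def)
lemma peval_psum: "peval \<rho> (psum ps) = sum_list (map (peval \<rho>) ps)"
  by (induction ps) (auto simp: psum_def)
lemma pdeg_psum: "(\<forall>p\<in>set ps. pdeg v p \<le> B) \<Longrightarrow> pdeg v (psum ps) \<le> B"
  by (induction ps) (auto simp: psum_def)
lemma pvars_psum: "pvars (psum ps) = \<Union> (pvars ` set ps)"
  by (induction ps) (auto simp: psum_def)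

lemma peval_hor: "\<rho> VB = b \<Longrightarrow> peval \<rho> (hor ts) = poly (Poly (map (peval \<rho>) ts)) b"
  by (induction ts rule: hor.induct) auto
lemma pvars_hor: "pvars (hor ts) \<subseteq> {VB} \<union> \<Union> (pvars ` set ts)"
  by (induction ts rule: hor.induct) auto
lemma pdeg_hor_VB: "(\<forall>t\<in>set ts. pdeg VB t = 0) \<Longrightarrow> pdeg VB (hor ts) \<le> length ts - 1"
  by (induction ts rule: hor.induct) auto
lemma pdeg_hor_other: "v \<noteq> VB \<Longrightarrow> (\<forall>t\<in>set ts. pdeg v t \<le> B) \<Longrightarrow> pdeg v (hor ts) \<le> B"
  by (induction ts rule: hor.induct) auto

lemma peval_cong: "(\<And>v. v \<in> pvars p \<Longrightarrow> \<rho> v = \<sigma> v) \<Longrightarrow> peval \<rho> p = peval \<sigma> p"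
  by (induction p) auto
lemma pdeg_notin: "v \<notin> pvars p \<Longrightarrow> pdeg v p = 0"
  by (induction p) auto

lemma Kx_env: "in_Kx n t \<Longrightarrow> peval (env a b x) t = peval (env 0 0 x) t"
  unfolding in_Kx_def by (rule peval_cong) (auto simp: env_def)
lemma Kx_VA: "in_Kx n t \<Longrightarrow> pdeg VA t = 0"
  unfolding in_Kx_def by (rule pdeg_notin) auto
lemma Kx_VB: "in_Kx n t \<Longrightarrow> pdeg VB t = 0"
  unfolding in_Kx_def by (rule pdeg_notin) auto
lemma Kx_vars: "in_Kx n t \<Longrightarrow> pvars t \<subseteq> {VA, VB} \<union> VX ` {..<n}"
  unfolding in_Kx_def by auto

lemma env_VA[simp]: "env a b x VA = a" and env_VB[simp]: "env a b x VB = b"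
  by (auto simp: env_def)

lemma Poly_all_zero: "(\<forall>y\<in>set ys. y = 0) \<Longrightarrow> Poly ys = 0"
  by (induction ys) auto
lemma Poly_zero_D: "Poly ys = 0 \<Longrightarrow> \<forall>y\<in>set ys. y = 0"
  by (induction ys) auto

lemma sum_list_le_length: "(\<forall>c\<in>set xs. f c \<le> (1::nat)) \<Longrightarrow> sum_list (map f xs) \<le> length xs"
  by (induction xs) auto

lemma poly_prod_list_map: "poly (prod_list (map f xs)) b = prod_list (map (\<lambda>c. poly (f c) b) xs)"
  by (induction xs) auto

lemma dnf_part:
  fixes \<phi> :: "'a::field_char_0 nf"
  assumes nf: "nf_over n \<phi>"
  shows "\<exists>p. in_Kabx n p \<and> pdeg VA p \<le> length \<phi> \<and> pdeg VB p \<le> num_eqs \<phi> \<and>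
            (\<forall>x::nat \<Rightarrow> 'a. holds_DNF \<phi> x \<longleftrightarrow> (\<exists>a. \<forall>b. peval (env a b x) p = 0))"
proof -
  define c0 where "c0 c = PAdd (PConst 1) (PNeg (PMul (PVar VA) (pprod (snd c))))"
    for c :: "'a pexpr list \<times> 'a pexpr list"
  define fac where "fac c = hor (c0 c # fst c)" for c
  define p where "p = pprod (map fac \<phi>)"
  define PP where "PP x a c = Poly ((1 - a * prod_list (map (peval (env 0 0 x)) (snd c)))
       # map (peval (env 0 0 x)) (fst c))" for x :: "nat \<Rightarrow> 'a" and a c
  have T: "in_Kx n t" if "c \<in> set \<phi>" "t \<in> set (fst c)" for c t
    using nf that unfolding nf_over_def by auto
  have U: "in_Kx n t" if "c \<in> set \<phi>" "t \<in> set (snd c)" for c t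
    using nf that unfolding nf_over_def by auto
  have ev_c0: "peval (env a b x) (c0 c) = 1 - a * prod_list (map (peval (env 0 0 x)) (snd c))"
    if "c \<in> set \<phi>" for a b x c
  proof -
    have "map (peval (env a b x)) (snd c) = map (peval (env 0 0 x)) (snd c)"
    proof (rule map_cong[OF refl])
      fix t assume "t \<in> set (snd c)"
      from U[OF that this] show "peval (env a b x) t = peval (env 0 0 x) t" by (rule Kx_env)
    qed
    then show ?thesis by (simp add: c0_def peval_pprod del: map_eq_conv)
  qed
  have ev_fac: "peval (env a b x) (fac c) = poly (PP x a c) b" if "c \<in> set \<phi>" for a b x c
  proof -
    have "map (peval (env a b x)) (fst c) = map (peval (env 0 0 x)) (fst c)"
    proof (rule map_cong[OF refl])
      fix t assume "t \<in> set (fst c)"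
      from T[OF that this] show "peval (env a b x) t = peval (env 0 0 x) t" by (rule Kx_env)
    qed
    then show ?thesis unfolding fac_def PP_def
      by (subst peval_hor[where b=b]) (auto simp: ev_c0[OF that] simp del: map_eq_conv)
  qed
  have ev_p: "peval (env a b x) p = poly (prod_list (map (PP x a) \<phi>)) b" for a b x
  proof -
    have "peval (env a b x) p = prod_list (map (\<lambda>c. poly (PP x a c) b) \<phi>)"
      unfolding p_def peval_pprod map_map o_def
      by (rule arg_cong[where f=prod_list]) (auto intro!: map_cong ev_fac)
    also have "\<dots> = poly (prod_list (map (PP x a) \<phi>)) b"
      by (rule poly_prod_list_map[symmetric])
    finally show ?thesis .
  qed
  have vars: "in_Kabx n p"
  proof -
    have "pvars (fac c) \<subseteq> {VA, VB} \<union> VX ` {..<n}" if "c \<in> set \<phi>" for c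
    proof -
      have "pvars (c0 c) \<subseteq> {VA, VB} \<union> VX ` {..<n}"
        using U[OF that] Kx_vars unfolding c0_def by (fastforce simp: pvars_pprod)
      moreover have "pvars t \<subseteq> {VA, VB} \<union> VX ` {..<n}" if "t \<in> set (fst c)" for t
        using T[OF \<open>c \<in> set \<phi>\<close> that] Kx_vars by blast
      ultimately have "{VB} \<union> \<Union> (pvars ` set (c0 c # fst c)) \<subseteq> {VA, VB} \<union> VX ` {..<n}"
        by auto
      then show ?thesis using pvars_hor[of "c0 c # fst c"] unfolding fac_def by (rule order_trans[rotated])
    qed
    then show ?thesis unfolding in_Kabx_def p_def pvars_pprod by auto
  qed
  have degA: "pdeg VA p \<le> length \<phi>"
  proof -
    have "pdeg VA (fac c) \<le> 1" if "c \<in> set \<phi>" for c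
    proof -
      have "pdeg VA (c0 c) \<le> 1"
      proof -
        have "\<forall>t\<in>set (snd c). pdeg VA t = 0" using U[OF that] Kx_VA by blast
        then show ?thesis by (simp add: c0_def pdeg_pprod sum_list_eq_0_iff)
      qed
      moreover have "pdeg VA t \<le> 1" if "t \<in> set (fst c)" for t
        using Kx_VA[OF T[OF \<open>c \<in> set \<phi>\<close> that]] by simp
      ultimately show ?thesis unfolding fac_def by (intro pdeg_hor_other) auto
    qed
    then show ?thesis unfolding p_def pdeg_pprod map_map o_def
      by (intro sum_list_le_length) auto
  qed
  have degB: "pdeg VB p \<le> num_eqs \<phi>"
  proof -
    have "pdeg VB (fac c) \<le> length (fst c)" if "c \<in> set \<phi>" for c
    proof -
      have "pdeg VB (c0 c) = 0"
      proof -
        have "\<forall>t\<in>set (snd c). pdeg VB t = 0" using U[OF that] Kx_VB by blast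
        then show ?thesis by (simp add: c0_def pdeg_pprod sum_list_eq_0_iff)
      qed
      moreover have "pdeg VB t = 0" if "t \<in> set (fst c)" for t
        using Kx_VB[OF T[OF \<open>c \<in> set \<phi>\<close> that]] by simp
      ultimately show ?thesis unfolding fac_def using pdeg_hor_VB[of "c0 c # fst c"] by auto
    qed
    then show ?thesis unfolding p_def pdeg_pprod map_map o_def num_eqs_def
      by (intro sum_list_mono) auto
  qed
  have sem: "holds_DNF \<phi> x \<longleftrightarrow> (\<exists>a. \<forall>b. peval (env a b x) p = 0)" for x :: "nat \<Rightarrow> 'a"
  proof
    assume "holds_DNF \<phi> x"
    then obtain c where c: "c \<in> set \<phi>" "clause_conj x c" unfolding holds_DNF_def by auto
    define P where "P = prod_list (map (peval (env 0 0 x)) (snd c))"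
    have "P \<noteq> 0" using c(2) unfolding P_def clause_conj_def by (auto simp: prod_list_zero_iff)
    then have "PP x (inverse P) c = 0" using c(2) unfolding PP_def clause_conj_def
      by (intro Poly_all_zero) (auto simp: P_def[symmetric])
    then have "prod_list (map (PP x (inverse P)) \<phi>) = 0"
      using c(1) by (auto simp: prod_list_zero_iff)
    then show "\<exists>a. \<forall>b. peval (env a b x) p = 0" by (metis ev_p poly_0)
  next
    assume "\<exists>a. \<forall>b. peval (env a b x) p = 0"
    then obtain a where a: "\<And>b. poly (prod_list (map (PP x a) \<phi>)) b = 0" by (auto simp: ev_p)
    then have "poly (prod_list (map (PP x a) \<phi>)) = poly 0" by auto
    then have "prod_list (map (PP x a) \<phi>) = 0" using poly_eq_poly_eq_iff by blast
    then obtain c where c: "c \<in> set \<phi>" "PP x a c = 0" by (auto simp: prod_list_zero_iff)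
    then have z: "\<forall>y\<in>set ((1 - a * prod_list (map (peval (env 0 0 x)) (snd c)))
       # map (peval (env 0 0 x)) (fst c)). y = 0" unfolding PP_def by (intro Poly_zero_D)
    then have "prod_list (map (peval (env 0 0 x)) (snd c)) \<noteq> 0" by auto
    then have "clause_conj x c" using z unfolding clause_conj_def by (auto simp: prod_list_zero_iff)
    then show "holds_DNF \<phi> x" using c(1) unfolding holds_DNF_def by auto
  qed
  show ?thesis using vars degA degB sem by blast
qed

lemma sum_list_single:
  fixes f :: "nat \<Rightarrow> 'a::comm_monoid_add"
  assumes "i0 < d" "\<And>i. i < d \<Longrightarrow> i \<noteq> i0 \<Longrightarrow> f i = 0"
  shows "sum_list (map f [0..<d]) = f i0"
proof -
  have "sum_list (map f [0..<d]) = sum f {..<d}"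
    by (metis atLeast_upt sum_set_upt_conv_sum_list_nat)
  also have "\<dots> = f i0 + sum f ({..<d} - {i0})"
    using assms(1) by (simp add: sum.remove)
  also have "sum f ({..<d} - {i0}) = 0" using assms(2) by (intro sum.neutral) auto
  finally show ?thesis by simp
qed

lemma sum_list_ones: "sum_list (map (\<lambda>_. 1::nat) xs) = length xs"
  by (induction xs) auto

lemma sum_list_Suc0: "sum_list (map (\<lambda>_. Suc 0) xs) = length xs"
  by (induction xs) auto

lemma length_filter_neq: "i < d \<Longrightarrow> length (filter (\<lambda>h. h \<noteq> i) [0..<d]) = d - 1"
proof -
  assume "i < d"
  have "length (filter (\<lambda>h. h \<noteq> i) [0..<d]) = card {h. h < d \<and> h \<noteq> i}"
    by (auto simp: length_filter_conv_card intro!: arg_cong[where f=card])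
  also have "{h. h < d \<and> h \<noteq> i} = {..<d} - {i}" by auto
  also have "card \<dots> = d - 1" using \<open>i < d\<close> by simp
  finally show ?thesis .
qed

lemma cnf_part:
  fixes \<psi> :: "'a::field_char_0 nf"
  assumes nf: "nf_over n \<psi>"
  shows "\<exists>q. in_Kabx n q \<and> pdeg VA q \<le> 2 * length \<psi> - 1 \<and> pdeg VB q \<le> max_ineqs \<psi> + 1 \<and>
            (\<forall>x::nat \<Rightarrow> 'a. holds_CNF \<psi> x \<longleftrightarrow> (\<forall>a. \<exists>b. peval (env a b x) q = 0))"
proof -
  define d where "d = length \<psi>"
  define A :: "nat \<Rightarrow> 'a pexpr" where "A i = PAdd (PVar VA) (PConst (- of_nat i))" for i
  define F1 :: "'a pexpr" where "F1 = PAdd (PConst 1) (PNeg (PMul (PVar VB) (pprod (map A [0..<d]))))"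
  define Uf :: "'a pexpr \<Rightarrow> 'a pexpr" where "Uf u = PAdd (PConst 1) (PNeg (PMul (PVar VB) u))" for u
  define Tm where "Tm i = PMul (PMul (pprod (map A (filter (\<lambda>h. h \<noteq> i) [0..<d]))) (pprod (fst (\<psi>!i))))
      (pprod (map Uf (snd (\<psi>!i))))" for i
  define q where "q = PMul F1 (psum (map Tm [0..<d]))"
  have T: "in_Kx n t" if "i < d" "t \<in> set (fst (\<psi>!i))" for i t
    using nf nth_mem[OF that(1)[unfolded d_def]] that(2) unfolding nf_over_def by blast
  have U: "in_Kx n t" if "i < d" "t \<in> set (snd (\<psi>!i))" for i t
    using nf nth_mem[OF that(1)[unfolded d_def]] that(2) unfolding nf_over_def by blast
  have vars: "in_Kabx n q"
  proof -
    let ?S = "{VA, VB} \<union> VX ` {..<n}"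
    have vA: "pvars (A i) \<subseteq> ?S" for i by (auto simp: A_def)
    have vF1: "pvars F1 \<subseteq> ?S" using vA by (auto simp: F1_def pvars_pprod)
    have vU: "pvars (Uf u) \<subseteq> ?S" if "pvars u \<subseteq> ?S" for u using that by (auto simp: Uf_def)
    have vT: "pvars (Tm i) \<subseteq> ?S" if "i < d" for i
    proof -
      have 1: "\<forall>t\<in>set (fst (\<psi>!i)). pvars t \<subseteq> ?S"
        using Kx_vars[OF T[OF that]] by blast
      have 2: "\<forall>t\<in>set (snd (\<psi>!i)). pvars (Uf t) \<subseteq> ?S"
      proof
        fix t assume "t \<in> set (snd (\<psi>!i))"
        then show "pvars (Uf t) \<subseteq> ?S" by (rule vU[OF Kx_vars[OF U[OF that]]])
      qed
      show ?thesis using 1 2 vA unfolding Tm_def by (simp add: pvars_pprod UN_subset_iff)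
    qed
    show ?thesis unfolding in_Kabx_def q_def using vF1 vT by (simp add: pvars_psum UN_subset_iff)
  qed
  have dA: "pdeg VA (A i) = 1" "pdeg VB (A i) = 0" for i by (auto simp: A_def)
  have degA: "pdeg VA q \<le> 2 * length \<psi> - 1"
  proof -
    have "pdeg VA F1 = d" by (simp add: F1_def pdeg_pprod dA o_def sum_list_ones sum_list_Suc0)
    moreover have "pdeg VA (Tm i) \<le> d - 1" if "i < d" for i
    proof -
      have "\<forall>t\<in>set (fst (\<psi>!i)). pdeg VA t = 0" using T[OF that] Kx_VA by blast
      moreover have "\<forall>t\<in>set (snd (\<psi>!i)). pdeg VA (Uf t) = 0" using U[OF that] Kx_VA
        by (auto simp: Uf_def)
      ultimately show ?thesis unfolding Tm_def
        by (simp add: pdeg_pprod dA o_def sum_list_ones sum_list_Suc0 length_filter_neq[OF that] sum_list_eq_0_iff)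
    qed
    then have "pdeg VA (psum (map Tm [0..<d])) \<le> d - 1" by (intro pdeg_psum) auto
    ultimately show ?thesis unfolding q_def d_def by simp
  qed
  have degB: "pdeg VB q \<le> max_ineqs \<psi> + 1"
  proof -
    have "pdeg VB F1 = 1" by (simp add: F1_def pdeg_pprod dA o_def sum_list_eq_0_iff)
    moreover have "pdeg VB (Tm i) \<le> max_ineqs \<psi>" if "i < d" for i
    proof -
      have "\<forall>t\<in>set (fst (\<psi>!i)). pdeg VB t = 0" using T[OF that] Kx_VB by blast
      moreover have "\<forall>t\<in>set (snd (\<psi>!i)). pdeg VB (Uf t) = 1" using U[OF that] Kx_VB
        by (auto simp: Uf_def)
      ultimately have "pdeg VB (Tm i) = length (snd (\<psi>!i))" unfolding Tm_def
        by (simp add: pdeg_pprod dA o_def sum_list_eq_0_iff map_idI sum_list_ones sum_list_Suc0 cong: map_cong)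
      also have "\<dots> \<le> max_ineqs \<psi>" unfolding max_ineqs_def
        using that unfolding d_def by (intro Max_ge) auto
      finally show ?thesis .
    qed
    then have "pdeg VB (psum (map Tm [0..<d])) \<le> max_ineqs \<psi>" by (intro pdeg_psum) auto
    ultimately show ?thesis unfolding q_def by simp
  qed
  define Pa where "Pa a = prod_list (map (\<lambda>i. a - of_nat i) [0..<d])" for a :: 'a
  define Q where "Q a i = prod_list (map (\<lambda>h. a - of_nat h) (filter (\<lambda>h. h \<noteq> i) [0..<d]))" for a :: 'a and i
  define TT where "TT x i = prod_list (map (peval (env 0 0 x)) (fst (\<psi>!i)))" for x :: "nat \<Rightarrow> 'a" and i
  define UU where "UU x b i = prod_list (map (\<lambda>u. 1 - b * peval (env 0 0 x) u) (snd (\<psi>!i)))"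
    for x :: "nat \<Rightarrow> 'a" and b i
  have evA: "peval (env a b x) (A i) = a - of_nat i" for a b x i by (simp add: A_def)
  have evT: "peval (env a b x) (Tm i) = Q a i * TT x i * UU x b i" if "i < d" for a b x i
  proof -
    have "map (peval (env a b x)) (fst (\<psi>!i)) = map (peval (env 0 0 x)) (fst (\<psi>!i))"
    proof (rule map_cong[OF refl])
      fix t assume "t \<in> set (fst (\<psi>!i))"
      from T[OF that this] show "peval (env a b x) t = peval (env 0 0 x) t" by (rule Kx_env)
    qed
    moreover have "map (peval (env a b x) \<circ> Uf) (snd (\<psi>!i)) = map (\<lambda>u. 1 - b * peval (env 0 0 x) u) (snd (\<psi>!i))"
    proof (rule map_cong[OF refl])
      fix t assume "t \<in> set (snd (\<psi>!i))"
      from Kx_env[OF U[OF that this]] show "(peval (env a b x) \<circ> Uf) t = 1 - b * peval (env 0 0 x) t"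
        by (simp add: Uf_def)
    qed
    ultimately show ?thesis unfolding Tm_def Q_def TT_def UU_def
      by (simp add: peval_pprod evA o_def del: map_eq_conv)
  qed
  have evq: "peval (env a b x) q = (1 - b * Pa a) * sum_list (map (\<lambda>i. Q a i * TT x i * UU x b i) [0..<d])"
    for a b x
  proof -
    have "map (peval (env a b x)) (map Tm [0..<d]) = map (\<lambda>i. Q a i * TT x i * UU x b i) [0..<d]"
      by (simp add: evT)
    then show ?thesis unfolding q_def F1_def Pa_def
      by (simp add: peval_psum peval_pprod evA o_def del: map_eq_conv)
  qed
  have K1: "Pa a = 0 \<longleftrightarrow> (\<exists>i<d. a = of_nat i)" for a
    unfolding Pa_def by (auto simp: prod_list_zero_iff)
  have K2: "Q (of_nat i0) i = 0" if "i0 < d" "i \<noteq> i0" for i0 i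
    unfolding Q_def using that by (auto simp: prod_list_zero_iff)
  have K3: "Q (of_nat i0) i0 \<noteq> 0" for i0
    unfolding Q_def by (auto simp: prod_list_zero_iff)
  have sem: "holds_CNF \<psi> x \<longleftrightarrow> (\<forall>a. \<exists>b. peval (env a b x) q = 0)" for x :: "nat \<Rightarrow> 'a"
  proof
    assume H: "holds_CNF \<psi> x"
    show "\<forall>a. \<exists>b. peval (env a b x) q = 0"
    proof
      fix a :: 'a
      show "\<exists>b. peval (env a b x) q = 0"
      proof (cases "Pa a = 0")
        case False
        then have "(1 - inverse (Pa a) * Pa a) = 0" by simp
        then show ?thesis unfolding evq by (intro exI[of _ "inverse (Pa a)"]) simp
      next
        case True
        then obtain i0 where i0: "i0 < d" "a = of_nat i0" using K1 by blast
        have cd: "clause_disj x (\<psi>!i0)" using H i0(1) unfolding holds_CNF_def d_def by auto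
        obtain b where b: "TT x i0 = 0 \<or> UU x b i0 = 0"
        proof (cases "\<exists>t\<in>set (fst (\<psi>!i0)). peval (env 0 0 x) t = 0")
          case True
          then have "TT x i0 = 0" unfolding TT_def by (auto simp: prod_list_zero_iff)
          then show ?thesis using that by blast
        next
          case False
          then obtain u where u: "u \<in> set (snd (\<psi>!i0))" "peval (env 0 0 x) u \<noteq> 0"
            using cd unfolding clause_disj_def by auto
          then have "UU x (inverse (peval (env 0 0 x) u)) i0 = 0"
            unfolding UU_def prod_list_zero_iff by force
          then show ?thesis using that by blast
        qed
        have "sum_list (map (\<lambda>i. Q a i * TT x i * UU x b i) [0..<d]) = Q a i0 * TT x i0 * UU x b i0"
          using i0 K2 by (intro sum_list_single) auto
        also have "\<dots> = 0" using b by auto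
        finally show ?thesis unfolding evq by auto
      qed
    qed
  next
    assume H: "\<forall>a. \<exists>b. peval (env a b x) q = 0"
    show "holds_CNF \<psi> x" unfolding holds_CNF_def
    proof
      fix c assume "c \<in> set \<psi>"
      then obtain i0 where i0: "i0 < d" "c = \<psi>!i0" unfolding d_def by (auto simp: in_set_conv_nth)
      obtain b where "peval (env (of_nat i0) b x) q = 0" using H by blast
      moreover have "Pa (of_nat i0) = 0" using K1 i0 by blast
      moreover have "sum_list (map (\<lambda>i. Q (of_nat i0) i * TT x i * UU x b i) [0..<d])
          = Q (of_nat i0) i0 * TT x i0 * UU x b i0"
        using i0 K2 by (intro sum_list_single) auto
      ultimately have "TT x i0 = 0 \<or> UU x b i0 = 0" using K3 unfolding evq by simp
      then show "clause_disj x c"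
      proof
        assume "TT x i0 = 0"
        then show ?thesis unfolding TT_def clause_disj_def i0(2) by (auto simp: prod_list_zero_iff)
      next
        assume "UU x b i0 = 0"
        then obtain u where "u \<in> set (snd (\<psi>!i0))" "1 - b * peval (env 0 0 x) u = 0"
          unfolding UU_def by (auto simp: prod_list_zero_iff)
        then show ?thesis unfolding clause_disj_def i0(2) by force
      qed
    qed
  qed
  show ?thesis using vars degA degB sem by blast
qed

theorem mainTheorem4:
  fixes n :: nat and \<phi> \<psi> :: "'a::field_char_0 nf"
  assumes "nf_over n \<phi>" and "nf_over n \<psi>"
  shows "(\<exists>p. in_Kabx n p \<and> pdeg VA p \<le> length \<phi> \<and> pdeg VB p \<le> num_eqs \<phi> \<and>
            (\<forall>x::nat \<Rightarrow> 'a. holds_DNF \<phi> x \<longleftrightarrow> (\<exists>a. \<forall>b. peval (env a b x) p = 0)))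
       \<and> (\<exists>q. in_Kabx n q \<and> pdeg VA q \<le> 2 * length \<psi> - 1 \<and> pdeg VB q \<le> max_ineqs \<psi> + 1 \<and>
            (\<forall>x::nat \<Rightarrow> 'a. holds_CNF \<psi> x \<longleftrightarrow> (\<forall>a. \<exists>b. peval (env a b x) q = 0)))"
  using dnf_part[OF assms(1)] cnf_part[OF assms(2)] by blast

end
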